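(* Let $\mathbf{X}\in\mathcal{X}$ be a covariate vector, $A\in\{1,\dots,k\}$ ($k\ge 2$) a treatment, and $Y>0$ a bounded outcome (smaller is better), with $p(A=j\mid\mathbf{X})>0$ almost everywhere for every $j$. Let $\mu_j(\mathbf{x})=\mathbb{E}(Y\mid \mathbf{X}=\mathbf{x},A=j)$ and let $\mu_{(1)}(\mathbf{x})=\min_j\mu_j(\mathbf{x})$. Fix $c\ge 1$ and define the optimal A-ITR $\phi^*(\mathbf{x})=\{j:\ \mu_j(\mathbf{x})/\mu_{(1)}(\mathbf{x})\le c\}$. Let $\ell_D:\mathbb{R}\to\mathbb{R}$ be convex and differentiable with $\ell_D'(u)>0$ for all $u$, and let $$\mathbf{f}^*=\operatorname{argmin}_{\mathbf{f}:\mathcal{X}\to\mathbb{R}^{k-1}}\mathbb{E}\left[\frac{Y}{p(A\mid\mathbf{X})}\ell_D(\langle \mathbf{W}_A,\mathbf{f}(\mathbf{X})\rangle)\right].$$ For $\mathbf{x}\in\mathcal{X}$, order the vertices so that $\langle\mathbf{W}_{(1)},\mathbf{f}^*(\mathbf{x})\rangle>\dots>\langle\mathbf{W}_{(k)},\mathbf{f}^*(\mathbf{x})\rangle$ and define $$\phi^D_{\mathbf{f}^*}(\mathbf{x})=\left\{j:\ \frac{\ell_D'(\langle\mathbf{W}_{(1)},\mathbf{f}^*(\mathbf{x})\rangle)}{\ell_D'(\langle\mathbf{W}_j,\mathbf{f}^*(\mathbf{x})\rangle)}\le c\right\}.$$ Then $\phi^D_{\mathbf{f}^*}$ coincides wi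th $\phi^*$.
   Context: $\mathbf{W}_1,\dots,\mathbf{W}_k\in\mathbb{R}^{k-1}$ are the vertices of a simplex: $\mathbf{W}_1=(k-1)^{-1/2}\mathbf{1}_{k-1}$ and $\mathbf{W}_j=-(1+k^{1/2})(k-1)^{-3/2}\mathbf{1}_{k-1}+[k/(k-1)]^{1/2}\mathbf{e}_{j-1}$ for $2\le j\le k$, where $\mathbf{1}_{k-1}$ is the all-ones vector and $\mathbf{e}_{j-1}$ the $(j-1)$th standard basis vector of $\mathbb{R}^{k-1}$. The conditional means are assumed strictly ordered, $\mu_{(1)}<\dots<\mu_{(k)}$. An A-ITR is a map from $\mathcal{X}$ to nonempty subsets of $\{1,\dots,k\}$. *)

theory Defs
  imports "HOL-Probability.Probability"
begin

text \<open>Simplex vertex W_j in R^(k-1); vectors of R^(k-1) are functions nat => real,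
  only the coordinates 1..k-1 matter.\<close>
definition simplex_vertex :: "nat \<Rightarrow> nat \<Rightarrow> nat \<Rightarrow> real" where
  "simplex_vertex k j i =
     (if j = 1 then 1 / sqrt (real k - 1)
      else - (1 + sqrt (real k)) / (real k - 1) powr (3/2)
           + (if i = j - 1 then sqrt (real k / (real k - 1)) else 0))"

definition vinner :: "nat \<Rightarrow> (nat \<Rightarrow> real) \<Rightarrow> (nat \<Rightarrow> real) \<Rightarrow> real" where
  "vinner k w v = (\<Sum>i\<in>{1..k-1}. w i * v i)"

text \<open>Conditional mean mu_j(x) = E(Y | X = x, A = j), where K j x is the conditional
  law of Y given X = x, A = j.\<close>
definition cond_mean :: "(nat \<Rightarrow> 'x \<Rightarrow> real measure) \<Rightarrow> nat \<Rightarrow> 'x \<Rightarrow> real" where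
  "cond_mean K j x = (\<integral>y. y \<partial>(K j x))"

text \<open>Conditional expectation given X = x of Y / p(A|X) * l(<W_A, f(X)>),
  A | X = x distributed as p(.|x), Y | X = x, A = j distributed as K j x.\<close>
definition ipw_integrand ::
  "(nat \<Rightarrow> 'x \<Rightarrow> real) \<Rightarrow> (nat \<Rightarrow> 'x \<Rightarrow> real measure) \<Rightarrow> (real \<Rightarrow> real) \<Rightarrow> nat
    \<Rightarrow> ('x \<Rightarrow> nat \<Rightarrow> real) \<Rightarrow> 'x \<Rightarrow> real" where
  "ipw_integrand p K l k f x =
     (\<Sum>j\<in>{1..k}. p j x *
        (\<integral>y. y / p j x * l (vinner k (simplex_vertex k j) (f x)) \<partial>(K j x)))"

definition ipw_risk ::
  "'x measure \<Rightarrow> (nat \<Rightarrow> 'x \<Rightarrow> real) \<Rightarrow> (nat \<Rightarrow> 'x \<Rightarrow> real measure) \<Rightarrow> (real \<Rightarrow> real)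
    \<Rightarrow> nat \<Rightarrow> ('x \<Rightarrow> nat \<Rightarrow> real) \<Rightarrow> real" where
  "ipw_risk M p K l k f = (\<integral>x. ipw_integrand p K l k f x \<partial>M)"

definition admissible ::
  "'x measure \<Rightarrow> (nat \<Rightarrow> 'x \<Rightarrow> real) \<Rightarrow> (nat \<Rightarrow> 'x \<Rightarrow> real measure) \<Rightarrow> (real \<Rightarrow> real)
    \<Rightarrow> nat \<Rightarrow> ('x \<Rightarrow> nat \<Rightarrow> real) \<Rightarrow> bool" where
  "admissible M p K l k f \<longleftrightarrow>
     (\<forall>i\<in>{1..k-1}. (\<lambda>x. f x i) \<in> borel_measurable M) \<and>
     integrable M (ipw_integrand p K l k f)"

definition opt_AITR :: "nat \<Rightarrow> real \<Rightarrow> (nat \<Rightarrow> real) \<Rightarrow> nat set" where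
  "opt_AITR k c mu = {j\<in>{1..k}. mu j / Min (mu ` {1..k}) \<le> c}"

text \<open>phi^D_f(x): W_(1) is the vertex with the largest inner product with f(x).\<close>
definition AITR_D :: "nat \<Rightarrow> (real \<Rightarrow> real) \<Rightarrow> real \<Rightarrow> (nat \<Rightarrow> real) \<Rightarrow> nat set" where
  "AITR_D k l' c v =
     {j\<in>{1..k}. l' (Max ((\<lambda>i. vinner k (simplex_vertex k i) v) ` {1..k}))
                 / l' (vinner k (simplex_vertex k j) v) \<le> c}"

end

theory Submission
  imports Defs
begin


lemma vinner_upd:
  assumes "i \<in> {1..k-1}"
  shows "vinner k w (v(i := v i + t)) = vinner k w v + t * w i"
proof -
  have "vinner k w (v(i := v i + t)) = (\<Sum>i'\<in>{1..k-1}. w i' * v i' + (if i' = i then t * w i else 0))"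
    unfolding vinner_def by (intro sum.cong) (auto simp: algebra_simps)
  also have "\<dots> = vinner k w v + t * w i"
    using assms by (simp add: sum.distrib vinner_def)
  finally show ?thesis .
qed

lemma ipw_eq:
  "ipw_integrand p K l k f x =
    (\<Sum>j\<in>{1..k}. if p j x = 0 then 0 else cond_mean K j x * l (vinner k (simplex_vertex k j) (f x)))"
  unfolding ipw_integrand_def cond_mean_def
  by (intro sum.cong) (auto simp: field_simps)

lemma simplex_identity:
  assumes "k \<ge> (2::nat)"
  shows "- (1 + sqrt (real k)) / (real k - 1) powr (3/2) * (real k - 1) + sqrt (real k / (real k - 1))
         = - (1 / sqrt (real k - 1))"
proof -
  define r where "r = sqrt (real k - 1)"
  have k1: "real k - 1 > 0" using assms by simp
  have r: "r > 0" using k1 by (simp add: r_def)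
  have rr: "r * r = real k - 1" using k1 by (simp add: r_def)
  have "(real k - 1) powr (3/2) = (real k - 1) powr 1 * (real k - 1) powr (1/2)"
    by (subst powr_add[symmetric]) simp
  also have "\<dots> = (real k - 1) * r" using k1 by (simp add: powr_half_sqrt r_def)
  finally have p: "(real k - 1) powr (3/2) = (real k - 1) * r" .
  have s: "sqrt (real k / (real k - 1)) = sqrt (real k) / r" by (simp add: r_def real_sqrt_divide)
  show ?thesis unfolding p s r_def[symmetric] using r k1
    by (simp add: field_simps)
qed

lemma simplex_lin:
  assumes k: "k \<ge> (2::nat)"
    and h: "\<forall>i\<in>{1..k-1}. (\<Sum>j\<in>{1..k}. lam j * simplex_vertex k j i) = 0"
  shows "\<forall>j\<in>{1..k}. lam j = lam 1"
proof -
  define al where "al = 1 / sqrt (real k - 1)"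
  define be where "be = - (1 + sqrt (real k)) / (real k - 1) powr (3/2)"
  define ga where "ga = sqrt (real k / (real k - 1))"
  define S where "S = (\<Sum>j\<in>{2..k}. lam j)"
  have k1: "real k - 1 > 0" using k by simp
  have al0: "al > 0" using k1 by (simp add: al_def)
  have ga0: "ga > 0" using k1 by (simp add: ga_def)
  have id: "be * (real k - 1) + ga = - al"
    using simplex_identity[OF k] by (simp add: al_def be_def ga_def)
  have eq: "lam 1 * al + be * S + ga * lam (i+1) = 0" if i: "i \<in> {1..k-1}" for i
  proof -
    have "i+1 \<in> {2..k}" using i k by auto
    have "(\<Sum>j\<in>{1..k}. lam j * simplex_vertex k j i)
        = lam 1 * al + (\<Sum>j\<in>{2..k}. lam j * be + (if j = i + 1 then lam j * ga else 0))"
      using k by (subst sum.atLeast_Suc_atMost)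
        (auto simp: simplex_vertex_def al_def be_def ga_def algebra_simps intro!: sum.cong)
    also have "\<dots> = lam 1 * al + be * S + ga * lam (i+1)"
      using i k \<open>i+1 \<in> {2..k}\<close> by (simp add: sum.distrib S_def sum_distrib_left mult.commute)
    finally show ?thesis using h i by simp
  qed
  define c0 where "c0 = - (lam 1 * al + be * S) / ga"
  have lj: "lam j = c0" if "j \<in> {2..k}" for j
  proof -
    have "j - 1 \<in> {1..k-1}" "j - 1 + 1 = j" using that by auto
    with eq[of "j-1"] show ?thesis using ga0 by (simp add: c0_def field_simps)
  qed
  have "S = (\<Sum>j\<in>{2..k}. c0)" unfolding S_def using lj by (intro sum.cong) auto
  then have S: "S = (real k - 1) * c0" using k by simp
  have "lam 1 * al + be * S + ga * c0 = 0"
    using eq[of 1] lj[of 2] k by (simp add: numeral_2_eq_2)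
  moreover have "ga = - al - be * (real k - 1)" using id by linarith
  ultimately have "al * (lam 1 - c0) = 0" unfolding S
    by (simp add: algebra_simps)
  then have "lam 1 = c0" using al0 by simp
  then show ?thesis using lj by (metis atLeastAtMost_iff le_antisym not_less_eq_eq one_add_one plus_1_eq_Suc)
qed

lemma deriv_mono:
  fixes l l' :: "real \<Rightarrow> real"
  assumes cv: "convex_on UNIV l" and d: "\<forall>u. (l has_real_derivative l' u) (at u)"
    and ab: "a \<le> b"
  shows "l' a \<le> l' b"
proof (cases "a = b")
  case False
  then have ab': "a < b" using ab by simp
  have 1: "l b - l a \<ge> l' a * (b - a)"
    by (rule convex_on_imp_above_tangent[OF cv]) (use d in auto)
  have 2: "l a - l b \<ge> l' b * (a - b)"
    by (rule convex_on_imp_above_tangent[OF cv]) (use d in auto)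
  have "l' a * (b - a) \<le> l' b * (b - a)" using 1 2 by (simp add: algebra_simps)
  then show ?thesis using ab' by simp
qed simp


lemma final_pw:
  fixes l l' :: "real \<Rightarrow> real" and mu :: "nat \<Rightarrow> real"
  assumes k: "k \<ge> 2"
    and mu: "\<forall>j\<in>{1..k}. mu j > 0"
    and cv: "convex_on UNIV l" and d: "\<forall>u. (l has_real_derivative l' u) (at u)"
    and lp: "\<forall>u. l' u > 0"
    and h: "\<forall>i\<in>{1..k-1}. (\<Sum>j\<in>{1..k}. mu j * l' (vinner k (simplex_vertex k j) v) * simplex_vertex k j i) = 0"
  shows "AITR_D k l' c v = opt_AITR k c mu"
proof -
  define a where "a j = vinner k (simplex_vertex k j) v" for j
  define L where "L = mu 1 * l' (a 1)"
  have 1: "(1::nat) \<in> {1..k}" using k by simp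
  have lam: "\<forall>j\<in>{1..k}. mu j * l' (a j) = L"
  proof -
    have "\<forall>i\<in>{1..k-1}. (\<Sum>j\<in>{1..k}. mu j * l' (a j) * simplex_vertex k j i) = 0"
      using h unfolding a_def .
    from simplex_lin[OF k this] show ?thesis unfolding L_def .
  qed
  have L0: "L > 0" unfolding L_def using mu lp 1 by auto
  have la: "l' (a j) = L / mu j" if "j \<in> {1..k}" for j
  proof -
    have "mu j * l' (a j) = L" "mu j > 0" using lam that mu by auto
    then show ?thesis by (simp add: field_simps)
  qed
  have fin: "finite (a ` {1..k})" "a ` {1..k} \<noteq> {}" using 1 by auto
  obtain m where m: "m \<in> {1..k}" "Max (a ` {1..k}) = a m"
    using Max_in[OF fin] by auto
  have am: "a j \<le> a m" if "j \<in> {1..k}" for j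
    using m(2) fin that by (metis Max_ge image_eqI)
  have mum: "mu m \<le> mu j" if j: "j \<in> {1..k}" for j
  proof -
    have "L / mu j \<le> L / mu m" using deriv_mono[OF cv d am[OF j]] la[OF j] la[OF m(1)] by simp
    then have "L * mu m \<le> L * mu j" using mu j m(1) by (simp add: divide_simps)
    then show ?thesis using L0 by simp
  qed
  have Min: "Min (mu ` {1..k}) = mu m"
    by (rule Min_eqI) (use mum m(1) in auto)
  have r: "l' (a m) / l' (a j) = mu j / mu m" if "j \<in> {1..k}" for j
    using la[OF that] la[OF m(1)] L0 mu that m(1) by (simp add: field_simps)
  show ?thesis unfolding AITR_D_def opt_AITR_def Min
  proof (intro Collect_cong conj_cong refl)
    fix j assume "j \<in> {1..k}"
    then show "(l' (Max ((\<lambda>i. vinner k (simplex_vertex k i) v) ` {1..k})) / l' (vinner k (simplex_vertex k j) v) \<le> c)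
      = (mu j / mu m \<le> c)" using r[of j] m(2) unfolding a_def by simp
  qed
qed



theorem proposition2:
  fixes M :: "'x measure" and p :: "nat \<Rightarrow> 'x \<Rightarrow> real"
    and K :: "nat \<Rightarrow> 'x \<Rightarrow> real measure"
    and l l' :: "real \<Rightarrow> real" and c B :: real and k :: nat
    and fstar :: "'x \<Rightarrow> nat \<Rightarrow> real"
  assumes "prob_space M" and "k \<ge> 2"
    and "\<forall>j\<in>{1..k}. p j \<in> borel_measurable M"
    and "\<forall>j\<in>{1..k}. \<forall>x\<in>space M. p j x \<ge> 0"
    and "\<forall>x\<in>space M. (\<Sum>j\<in>{1..k}. p j x) = 1"
    and "AE x in M. \<forall>j\<in>{1..k}. p j x > 0"
    and "\<forall>j\<in>{1..k}. K j \<in> M \<rightarrow>\<^sub>M prob_algebra borel"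
    and "\<forall>j\<in>{1..k}. \<forall>x\<in>space M. AE y in K j x. 0 < y \<and> y \<le> B"
    and "AE x in M. inj_on (\<lambda>j. cond_mean K j x) {1..k}"
    and "convex_on UNIV l"
    and "\<forall>u. (l has_real_derivative l' u) (at u)"
    and "\<forall>u. l' u > 0"
    and "c \<ge> 1"
    and "admissible M p K l k fstar"
    and "\<forall>f. admissible M p K l k f \<longrightarrow> ipw_risk M p K l k fstar \<le> ipw_risk M p K l k f"
  shows "AE x in M. AITR_D k l' c (fstar x) = opt_AITR k c (\<lambda>j. cond_mean K j x)"
proof -
  interpret M: prob_space M by (rule assms(1))
  have k: "k \<ge> 2" by (rule assms(2))
  define mu where "mu j x = cond_mean K j x" for j x
  define G where "G x v = (\<Sum>j\<in>{1..k}. if p j x = 0 then 0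
      else mu j x * l (vinner k (simplex_vertex k j) v))" for x v
  have ipw: "ipw_integrand p K l k f x = G x (f x)" for f x
    using ipw_eq unfolding G_def mu_def by simp
  have Kprob: "prob_space (K j x) \<and> sets (K j x) = sets borel" if "j \<in> {1..k}" "x \<in> space M" for j x
    using measurable_space[OF assms(7)[rule_format, OF that(1)] that(2)] by (auto simp: space_prob_algebra)
  have mu_bd: "0 < mu j x \<and> mu j x \<le> B" if j: "j \<in> {1..k}" and x: "x \<in> space M" for j x
  proof -
    interpret Kp: prob_space "K j x" using Kprob[OF j x] by simp
    have meas: "(\<lambda>y. y) \<in> borel_measurable (K j x)"
      by (subst measurable_cong_sets[OF conjunct2[OF Kprob[OF j x]] refl]) simp
    have ae: "AE y in K j x. 0 < y \<and> y \<le> B" using assms(8) j x by auto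
    have int: "integrable (K j x) (\<lambda>y. y)"
      by (rule Kp.integrable_const_bound[where B=B]) (use ae meas in \<open>auto elim: eventually_mono\<close>)
    have "0 < (\<integral>y. y \<partial>K j x)"
    proof -
      have "(\<integral>y. - y \<partial>K j x) < 0"
        by (rule Kp.expectation_less) (use int ae in \<open>auto elim: eventually_mono\<close>)
      then show ?thesis by simp
    qed
    moreover have "(\<integral>y. y \<partial>K j x) \<le> B"
      by (rule Kp.integral_le_const[OF int]) (use ae in \<open>auto elim: eventually_mono\<close>)
    ultimately show ?thesis unfolding mu_def cond_mean_def by simp
  qed
  have mu_meas: "mu j \<in> borel_measurable M" if "j \<in> {1..k}" for j
    using measurable_compose[OF measurable_prob_algebraD[OF assms(7)[rule_format, OF that]]
        integral_measurable_subprob_algebra[of "\<lambda>y::real. y" borel]]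
    unfolding mu_def cond_mean_def by simp
  have lD: "\<And>u. (l has_real_derivative l' u) (at u)" using assms(11) by simp
  have lcont: "continuous_on UNIV l"
    using lD by (meson DERIV_isCont continuous_at_imp_continuous_on)
  have lmeas: "l \<in> borel_measurable borel" by (rule borel_measurable_continuous_onI[OF lcont])
  have Gmeas: "(\<lambda>x. G x (v x)) \<in> borel_measurable M"
    if v: "\<forall>i\<in>{1..k-1}. (\<lambda>x. v x i) \<in> borel_measurable M" for v
    unfolding G_def
  proof (intro borel_measurable_sum)
    fix j assume j: "j \<in> {1..k}"
    have vi: "(\<lambda>x. vinner k (simplex_vertex k j) (v x)) \<in> borel_measurable M"
      unfolding vinner_def using v by (intro borel_measurable_sum borel_measurable_times) auto
    have lv: "(\<lambda>x. l (vinner k (simplex_vertex k j) (v x))) \<in> borel_measurable M"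
      using measurable_compose[OF vi lmeas] by (simp add: comp_def)
    note [measurable] = lv mu_meas[OF j] assms(3)[rule_format, OF j]
    show "(\<lambda>x. if p j x = 0 then 0 else mu j x * l (vinner k (simplex_vertex k j) (v x))) \<in> borel_measurable M"
      by measurable
  qed
  have fmeas: "\<forall>i\<in>{1..k-1}. (\<lambda>x. fstar x i) \<in> borel_measurable M"
    and int0: "integrable M (ipw_integrand p K l k fstar)"
    using assms(14) unfolding admissible_def by auto
  define tt where "tt n s = (if s then 1 else -1) / real n" for n :: nat and s :: bool
  define E where "E N n i s = {x\<in>space M. (\<forall>j\<in>{1..k}. p j x > 0) \<and>
      (\<forall>j\<in>{1..k}. \<bar>vinner k (simplex_vertex k j) (fstar x)\<bar> \<le> real N) \<and>
      G x ((fstar x)(i := fstar x i + tt n s)) < G x (fstar x)}" for N n i s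
  have updmeas: "\<forall>i'\<in>{1..k-1}. (\<lambda>x. ((fstar x)(i := fstar x i + t)) i') \<in> borel_measurable M" for i t
  proof (intro ballI)
    fix i' assume i': "i' \<in> {1..k-1}"
    show "(\<lambda>x. ((fstar x)(i := fstar x i + t)) i') \<in> borel_measurable M"
    proof (cases "i' = i")
      case True
      have [measurable]: "(\<lambda>x. fstar x i) \<in> borel_measurable M" using fmeas i' True by auto
      show ?thesis using True by simp
    next
      case False
      then show ?thesis using fmeas i' by simp
    qed
  qed
  have Emeas: "E N n i s \<in> sets M" for N n i s
    unfolding E_def
  proof (intro sets.sets_Collect_conj sets.sets_Collect_finite_All)
    show "{x \<in> space M. G x ((fstar x)(i := fstar x i + tt n s)) < G x (fstar x)} \<in> sets M"
      using Gmeas[OF updmeas] Gmeas[OF fmeas] by (rule borel_measurable_less)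
  next
    fix j assume j: "j \<in> {1..k}"
    have vi: "(\<lambda>x. vinner k (simplex_vertex k j) (fstar x)) \<in> borel_measurable M"
      unfolding vinner_def using fmeas by (intro borel_measurable_sum borel_measurable_times) auto
    note [measurable] = vi
    show "{x \<in> space M. \<bar>vinner k (simplex_vertex k j) (fstar x)\<bar> \<le> real N} \<in> sets M"
      by measurable
  next
    fix j assume j: "j \<in> {1..k}"
    note [measurable] = assms(3)[rule_format, OF j]
    show "{x \<in> space M. 0 < p j x} \<in> sets M" by measurable
  qed auto
  have B0: "B \<ge> 0"
  proof -
    obtain x0 where "x0 \<in> space M" using M.not_empty by blast
    then show ?thesis using mu_bd[of 1 x0] k by force
  qed
  have nullE: "AE x in M. x \<notin> E N n i s" if i: "i \<in> {1..k-1}" for N n i s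
  proof (rule ccontr)
    assume nAE: "\<not> (AE x in M. x \<notin> E N n i s)"
    define t where "t = tt n s"
    have t1: "\<bar>t\<bar> \<le> 1"
      unfolding t_def tt_def by (cases "n = 0") (auto simp: divide_simps)
    have Es: "E N n i s \<in> sets M" by (rule Emeas)
    have Epos: "emeasure M (E N n i s) \<noteq> 0"
    proof
      assume "emeasure M (E N n i s) = 0"
      then have "E N n i s \<in> null_sets M" using Es by auto
      then have "AE x in M. x \<notin> E N n i s" by (rule AE_not_in)
      with nAE show False by simp
    qed
    define f' where "f' x = (if x \<in> E N n i s then (fstar x)(i := fstar x i + t) else fstar x)" for x
    have f'meas: "\<forall>i'\<in>{1..k-1}. (\<lambda>x. f' x i') \<in> borel_measurable M"
    proof
      fix i' assume i': "i' \<in> {1..k-1}"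
      have "(\<lambda>x. if x \<in> E N n i s then ((fstar x)(i := fstar x i + t)) i' else fstar x i') \<in> borel_measurable M"
        by (rule measurable_If_set) (use updmeas i' fmeas Es in auto)
      moreover have "(\<lambda>x. f' x i') = (\<lambda>x. if x \<in> E N n i s then ((fstar x)(i := fstar x i + t)) i' else fstar x i')"
        by (rule ext) (simp add: f'_def)
      ultimately show "(\<lambda>x. f' x i') \<in> borel_measurable M" by simp
    qed
    have ipw_f': "ipw_integrand p K l k f' x =
        (if x \<in> E N n i s then G x ((fstar x)(i := fstar x i + t)) else ipw_integrand p K l k fstar x)" for x
      by (simp add: ipw f'_def)
    define Wb where "Wb = (\<Sum>j\<in>{1..k}. \<bar>simplex_vertex k j i\<bar>)"
    have Wb: "\<bar>simplex_vertex k j i\<bar> \<le> Wb" if "j \<in> {1..k}" for j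
      unfolding Wb_def by (rule member_le_sum) (use that in auto)
    have Wb0: "Wb \<ge> 0" unfolding Wb_def by (simp add: sum_nonneg)
    have cpt: "compact (l ` {-(real N + Wb)..real N + Wb})"
      by (rule compact_continuous_image[OF continuous_on_subset[OF lcont]]) auto
    then obtain Lm where Lm: "\<forall>u\<in>{-(real N + Wb)..real N + Wb}. \<bar>l u\<bar> \<le> Lm"
    proof -
      assume r: "\<And>Lm. \<forall>u\<in>{-(real N + Wb)..real N + Wb}. \<bar>l u\<bar> \<le> Lm \<Longrightarrow> thesis"
      from compact_imp_bounded[OF cpt] obtain a where "\<forall>y\<in>l ` {-(real N + Wb)..real N + Wb}. \<bar>y\<bar> \<le> a"
        unfolding bounded_real by blast
      then have "\<forall>u\<in>{-(real N + Wb)..real N + Wb}. \<bar>l u\<bar> \<le> a" by simp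
      then show thesis by (rule r)
    qed
    have Lm0: "Lm \<ge> 0" using Lm[rule_format, of 0] Wb0 by auto
    have Gbd: "\<bar>G x ((fstar x)(i := fstar x i + t))\<bar> \<le> real k * (B * Lm)" if xE: "x \<in> E N n i s" for x
    proof -
      have x: "x \<in> space M" and aN: "\<forall>j\<in>{1..k}. \<bar>vinner k (simplex_vertex k j) (fstar x)\<bar> \<le> real N"
        using xE unfolding E_def by auto
      have "\<bar>G x ((fstar x)(i := fstar x i + t))\<bar> \<le> (\<Sum>j\<in>{1..k}. \<bar>if p j x = 0 then 0
          else mu j x * l (vinner k (simplex_vertex k j) ((fstar x)(i := fstar x i + t)))\<bar>)"
        unfolding G_def by (rule sum_abs)
      also have "\<dots> \<le> (\<Sum>j\<in>{1..k}. B * Lm)"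
      proof (rule sum_mono)
        fix j assume j: "j \<in> {1..k}"
        have "\<bar>vinner k (simplex_vertex k j) (fstar x) + t * simplex_vertex k j i\<bar> \<le> real N + 1 * Wb"
          using abs_triangle_ineq[of "vinner k (simplex_vertex k j) (fstar x)" "t * simplex_vertex k j i"]
            aN[rule_format, OF j] mult_mono[OF t1 Wb[OF j]] by (simp add: abs_mult)
        then have "vinner k (simplex_vertex k j) (fstar x) + t * simplex_vertex k j i \<in> {-(real N + Wb)..real N + Wb}"
          by (simp add: abs_le_iff)
        then have lb: "\<bar>l (vinner k (simplex_vertex k j) (fstar x) + t * simplex_vertex k j i)\<bar> \<le> Lm"
          by (rule bspec[OF Lm])
        have mb: "\<bar>mu j x\<bar> \<le> B" using mu_bd[OF j x] by simp
        have "\<bar>mu j x * l (vinner k (simplex_vertex k j) (fstar x) + t * simplex_vertex k j i)\<bar> \<le> B * Lm"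
          unfolding abs_mult by (rule mult_mono[OF mb lb B0 abs_ge_zero])
        moreover have "vinner k (simplex_vertex k j) ((fstar x)(i := fstar x i + t))
            = vinner k (simplex_vertex k j) (fstar x) + t * simplex_vertex k j i"
          by (rule vinner_upd[OF i])
        moreover have "0 \<le> B * Lm" using B0 Lm0 by simp
        ultimately show "\<bar>if p j x = 0 then 0
          else mu j x * l (vinner k (simplex_vertex k j) ((fstar x)(i := fstar x i + t)))\<bar> \<le> B * Lm"
          by (cases "p j x = 0") simp_all
      qed
      also have "\<dots> = real k * (B * Lm)" by simp
      finally show ?thesis .
    qed
    have int': "integrable M (ipw_integrand p K l k f')"
    proof (rule Bochner_Integration.integrable_bound[where f="\<lambda>x. \<bar>ipw_integrand p K l k fstar x\<bar> + real k * (B * Lm)"])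
      show "integrable M (\<lambda>x. \<bar>ipw_integrand p K l k fstar x\<bar> + real k * (B * Lm))"
        using int0 by simp
      show "ipw_integrand p K l k f' \<in> borel_measurable M"
        unfolding ipw[abs_def] using Gmeas[OF f'meas] .
      show "AE x in M. norm (ipw_integrand p K l k f' x) \<le> norm (\<bar>ipw_integrand p K l k fstar x\<bar> + real k * (B * Lm))"
      proof (rule AE_I2)
        fix x
        have C0: "0 \<le> real k * (B * Lm)" using B0 Lm0 by simp
        show "norm (ipw_integrand p K l k f' x) \<le> norm (\<bar>ipw_integrand p K l k fstar x\<bar> + real k * (B * Lm))"
        proof (cases "x \<in> E N n i s")
          case True
          then show ?thesis using Gbd[OF True] C0 unfolding ipw_f' by simp
        next
          case False
          then show ?thesis using C0 unfolding ipw_f' by simp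
        qed
      qed
    qed
    have adm: "admissible M p K l k f'" unfolding admissible_def using f'meas int' by simp
    have le: "ipw_risk M p K l k fstar \<le> ipw_risk M p K l k f'" using assms(15) adm by simp
    have lt: "ipw_risk M p K l k f' < ipw_risk M p K l k fstar" unfolding ipw_risk_def
    proof (rule M.integral_less_AE[OF int' int0 Epos Es])
      have lt: "G x ((fstar x)(i := fstar x i + t)) < G x (fstar x)" if xE: "x \<in> E N n i s" for x
        using xE unfolding E_def t_def by auto
      show "AE x in M. x \<in> E N n i s \<longrightarrow> ipw_integrand p K l k f' x \<noteq> ipw_integrand p K l k fstar x"
      proof (rule AE_I2, rule impI)
        fix x assume xE: "x \<in> E N n i s"
        show "ipw_integrand p K l k f' x \<noteq> ipw_integrand p K l k fstar x"
          unfolding ipw_f' using xE lt[OF xE] by (simp add: ipw)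
      qed
      show "AE x in M. ipw_integrand p K l k f' x \<le> ipw_integrand p K l k fstar x"
      proof (rule AE_I2)
        fix x
        show "ipw_integrand p K l k f' x \<le> ipw_integrand p K l k fstar x"
        proof (cases "x \<in> E N n i s")
          case True
          then show ?thesis unfolding ipw_f' using lt[OF True] by (simp add: ipw)
        next
          case False
          then show ?thesis unfolding ipw_f' by simp
        qed
      qed
    qed
    from le lt show False by simp
  qed
  have AEall: "AE x in M. \<forall>idx\<in>(UNIV :: (nat \<times> nat \<times> nat \<times> bool) set).
      (case idx of (N, n, i, s) \<Rightarrow> i \<in> {1..k-1} \<longrightarrow> x \<notin> E N n i s)"
  proof (rule AE_ball_countable')
    fix idx :: "nat \<times> nat \<times> nat \<times> bool"
    obtain N n i s where idx: "idx = (N, n, i, s)" by (cases idx) auto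
    show "AE x in M. (case idx of (N, n, i, s) \<Rightarrow> i \<in> {1..k-1} \<longrightarrow> x \<notin> E N n i s)"
      unfolding idx using nullE[of i N n s] by (cases "i \<in> {1..k-1}") auto
  qed simp
  show ?thesis
    using AE_space AEall assms(6)
  proof eventually_elim
    case (elim x)
    then have x: "x \<in> space M" and pos: "\<forall>j\<in>{1..k}. p j x > 0"
      and ne: "\<And>N n i s. i \<in> {1..k-1} \<Longrightarrow> x \<notin> E N n i s" by auto
    have gz: "(\<Sum>j\<in>{1..k}. mu j x * l' (vinner k (simplex_vertex k j) (fstar x)) * simplex_vertex k j i) = 0"
      (is "?g = 0") if i: "i \<in> {1..k-1}" for i
    proof (rule ccontr)
      assume g0: "?g \<noteq> 0"
      define a where "a j = vinner k (simplex_vertex k j) (fstar x)" for j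
      define W where "W j = simplex_vertex k j i" for j
      define phi where "phi t = G x ((fstar x)(i := fstar x i + t))" for t
      have phi_eq: "phi t = (\<Sum>j\<in>{1..k}. mu j x * l (a j + t * W j))" for t
      proof -
        have "p j x \<noteq> 0" if "j \<in> {1..k}" for j using pos that by force
        then show ?thesis unfolding phi_def G_def a_def W_def using vinner_upd[OF i]
          by (intro sum.cong) (auto simp: algebra_simps)
      qed
      have phi0: "phi 0 = G x (fstar x)" by (simp add: phi_def)
      have D0: "((\<lambda>t. \<Sum>j\<in>{1..k}. mu j x * l (a j + t * W j)) has_real_derivative
          (\<Sum>j\<in>{1..k}. mu j x * (l' (a j + 0 * W j) * (0 * 0 + 1 * W j)))) (at 0)"
        by (intro DERIV_sum DERIV_cmult DERIV_chain2[OF lD] derivative_eq_intros) auto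
      have "?g = (\<Sum>j\<in>{1..k}. mu j x * (l' (a j + 0 * W j) * (0 * 0 + 1 * W j)))"
        unfolding a_def W_def by (simp add: algebra_simps)
      with D0 have D: "(phi has_real_derivative ?g) (at 0)"
        unfolding phi_eq[abs_def] by simp
      define N where "N = nat \<lceil>\<Sum>j\<in>{1..k}. \<bar>a j\<bar>\<rceil>"
      have aN: "\<bar>a j\<bar> \<le> real N" if "j \<in> {1..k}" for j
      proof -
        have "\<bar>a j\<bar> \<le> (\<Sum>j\<in>{1..k}. \<bar>a j\<bar>)"
          by (rule member_le_sum) (use that in auto)
        also have "\<dots> \<le> real N" unfolding N_def by (rule real_nat_ceiling_ge)
        finally show ?thesis .
      qed
      have inE: "x \<in> E N n i s" if "phi (tt n s) < phi 0" for n s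
        unfolding E_def using x pos aN that unfolding phi_def a_def by auto
      show False
      proof (cases "?g > 0")
        case True
        obtain d where d: "d > 0" "\<forall>h>0. h < d \<longrightarrow> phi (0 - h) < phi 0"
          using DERIV_pos_inc_left[OF D True] by blast
        obtain n :: nat where n: "n > 0" "inverse (real n) < d"
          using ex_inverse_of_nat_less[OF d(1)] by blast
        have "phi (tt n False) < phi 0"
          using d(2)[rule_format, of "inverse (real n)"] n by (simp add: tt_def divide_inverse)
        then show False using inE ne[OF i] by blast
      next
        case False
        then have gn: "?g < 0" using g0 by simp
        obtain d where d: "d > 0" "\<forall>h>0. h < d \<longrightarrow> phi 0 > phi (0 + h)"
          using DERIV_neg_dec_right[OF D gn] by blast
        obtain n :: nat where n: "n > 0" "inverse (real n) < d"
          using ex_inverse_of_nat_less[OF d(1)] by blast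
        have "phi (tt n True) < phi 0"
          using d(2)[rule_format, of "inverse (real n)"] n by (simp add: tt_def divide_inverse)
        then show False using inE ne[OF i] by blast
      qed
    qed
    have "AITR_D k l' c (fstar x) = opt_AITR k c (\<lambda>j. mu j x)"
      by (rule final_pw[OF k _ assms(10) assms(11) assms(12)]) (use mu_bd x gz in auto)
    then show ?case unfolding mu_def .
  qed
qed


end
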